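(* Let $b\ge2$ be an integer and let $w$ be a fixed block of $b$-ary digits of length $p\ge1$. For every $k\ge0$, the power series $Z_w(k)$ has radius of convergence at least $(b^p-1)^{-1/p}$. Moreover, for every $k\ge0$, $$\sum_{0\le j\le k}Z_w(j)(b^{-1})\le p\,(k+1)\,b^p.$$
   Context: Strings are finite sequences over $\{0,\dots,b-1\}$, including the empty string. $k_w(X)$ is the number of possibly overlapping occurrences of $w$ in the string $X$. $N_w(k,l)$ is the number of strings $X$ of length $l$ with $k_w(X)=k$, and $Z_w(k)=\sum_{l\ge0}N_w(k,l)t^l\in\mathbb{Z}[[t]]$. *)

theory Defs
  imports "HOL-Analysis.Analysis"
begin

definition occ :: "nat list \<Rightarrow> nat list \<Rightarrow> nat" where
  "occ w X = card {i. i + length w \<le> length X \<and> take (length w) (drop i X) = w}"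

definition Ncount :: "nat \<Rightarrow> nat list \<Rightarrow> nat \<Rightarrow> nat \<Rightarrow> nat" where
  "Ncount b w k l = card {X :: nat list. length X = l \<and> set X \<subseteq> {..<b} \<and> occ w X = k}"

definition Zcoeff :: "nat \<Rightarrow> nat list \<Rightarrow> nat \<Rightarrow> nat \<Rightarrow> real" where
  "Zcoeff b w k l = real (Ncount b w k l)"

definition Zval :: "nat \<Rightarrow> nat list \<Rightarrow> nat \<Rightarrow> real \<Rightarrow> real" where
  "Zval b w k t = (\<Sum>l. Zcoeff b w k l * t ^ l)"

end

theory Submission
  imports Defs
begin

fun bc :: "nat list \<Rightarrow> nat \<Rightarrow> nat list \<Rightarrow> nat" where
  "bc w 0 X = 0"
| "bc w (Suc m) X = (if take (length w) X = w then 1 else 0) + bc w m (drop (length w) X)"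

definition Ls :: "nat \<Rightarrow> nat \<Rightarrow> nat list set" where
  "Ls b n = {X. length X = n \<and> set X \<subseteq> {..<b}}"

definition Gc :: "nat \<Rightarrow> nat list \<Rightarrow> nat \<Rightarrow> nat \<Rightarrow> nat \<Rightarrow> nat" where
  "Gc b w m r k = card {X \<in> Ls b (m * length w + r). bc w m X \<le> k}"

lemma Ls_finite: "finite (Ls b n)"
proof -
  have "finite {xs. set xs \<subseteq> {..<b} \<and> length xs = n}"
    by (rule finite_lists_length_eq) simp
  then show ?thesis unfolding Ls_def by (simp add: conj_commute)
qed

lemma Ls_card: "card (Ls b n) = b ^ n"
proof -
  have "card {xs. set xs \<subseteq> {..<b} \<and> length xs = n} = card {..<b} ^ n"
    by (rule card_lists_length_eq) simp
  then show ?thesis unfolding Ls_def by (simp add: conj_commute)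
qed

lemma occ_app:
  assumes "length u = length w" "w \<noteq> []"
  shows "(if u = w then 1 else 0) + occ w Y \<le> occ w (u @ Y)"
proof -
  define Oc where "Oc X = {i. i + length w \<le> length X \<and> take (length w) (drop i X) = w}" for X
  have finO: "finite (Oc X)" for X
    by (rule finite_subset[of _ "{..length X}"]) (auto simp: Oc_def)
  have sub: "(if u = w then {0} else {}) \<union> (\<lambda>i. i + length w) ` Oc Y \<subseteq> Oc (u @ Y)"
    using assms by (auto simp: Oc_def)
  have disj: "(if u = w then {0} else {}) \<inter> (\<lambda>i. i + length w) ` Oc Y = {}"
    using assms by auto
  have "card ((if u = w then {0} else {}) \<union> (\<lambda>i. i + length w) ` Oc Y)
      = card (if u = w then {0::nat} else {}) + card ((\<lambda>i. i + length w) ` Oc Y)"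
    by (rule card_Un_disjoint) (use disj finO in auto)
  also have "card ((\<lambda>i. i + length w) ` Oc Y) = card (Oc Y)"
    by (rule card_image) (auto simp: inj_on_def)
  finally have "(if u = w then 1 else 0) + card (Oc Y) \<le> card (Oc (u @ Y))"
    using card_mono[OF finO sub] by (auto split: if_splits)
  then show ?thesis unfolding occ_def Oc_def by simp
qed

lemma occ_bc:
  assumes "m * length w \<le> length X" "w \<noteq> []"
  shows "bc w m X \<le> occ w X"
  using assms(1)
proof (induction m arbitrary: X)
  case 0
  then show ?case by simp
next
  case (Suc m)
  have IH: "bc w m (drop (length w) X) \<le> occ w (drop (length w) X)"
    using Suc by (intro Suc.IH) auto
  have l: "length (take (length w) X) = length w" using Suc.prems by auto
  have "(if take (length w) X = w then 1 else 0) + occ w (drop (length w) X)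
        \<le> occ w (take (length w) X @ drop (length w) X)"
    by (rule occ_app[OF l assms(2)])
  then show ?case using IH by simp
qed

lemma Gc_rec:
  assumes "set w \<subseteq> {..<b}"
  shows "Gc b w (Suc m) r k \<le> (if k = 0 then 0 else Gc b w m r (k - 1)) + (b ^ length w - 1) * Gc b w m r k"
proof -
  define p where "p = length w"
  define S where "S = {X \<in> Ls b (Suc m * p + r). bc w (Suc m) X \<le> k}"
  define A1 where "A1 = {Y \<in> Ls b (m * p + r). bc w m Y + 1 \<le> k}"
  define A2 where "A2 = {Y \<in> Ls b (m * p + r). bc w m Y \<le> k}"
  have finA1: "finite A1" unfolding A1_def using Ls_finite by auto
  have finA2: "finite A2" unfolding A2_def using Ls_finite by auto
  have finP: "finite (Ls b p - {w})" using Ls_finite by auto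
  have sub: "S \<subseteq> (\<lambda>Y. w @ Y) ` A1 \<union> (\<lambda>(u, Y). u @ Y) ` ((Ls b p - {w}) \<times> A2)"
  proof
    fix X assume X: "X \<in> S"
    define u where "u = take p X"
    define Y where "Y = drop p X"
    have XuY: "X = u @ Y" unfolding u_def Y_def by simp
    have lX: "length X = Suc m * p + r" and sX: "set X \<subseteq> {..<b}" and bX: "bc w (Suc m) X \<le> k"
      using X unfolding S_def Ls_def by auto
    have lu: "length u = p" unfolding u_def using lX by auto
    have uL: "u \<in> Ls b p" unfolding Ls_def using lu sX set_take_subset[of p X] u_def by auto
    have YL: "Y \<in> Ls b (m * p + r)" unfolding Ls_def Y_def using lX sX set_drop_subset[of p X] by auto
    have bcX: "bc w (Suc m) X = (if u = w then 1 else 0) + bc w m Y"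
      unfolding u_def Y_def p_def by simp
    show "X \<in> (\<lambda>Y. w @ Y) ` A1 \<union> (\<lambda>(u, Y). u @ Y) ` ((Ls b p - {w}) \<times> A2)"
    proof (cases "u = w")
      case True
      then have "Y \<in> A1" using bcX bX YL unfolding A1_def by auto
      then show ?thesis using XuY True by auto
    next
      case False
      then have "Y \<in> A2" "u \<in> Ls b p - {w}" using bcX bX YL uL unfolding A2_def by auto
      then show ?thesis using XuY False by (auto intro!: image_eqI[of _ _ "(u, Y)"])
    qed
  qed
  have "card S \<le> card ((\<lambda>Y. w @ Y) ` A1 \<union> (\<lambda>(u, Y). u @ Y) ` ((Ls b p - {w}) \<times> A2))"
    by (rule card_mono) (use finA1 finA2 finP sub in auto)
  also have "\<dots> \<le> card ((\<lambda>Y. w @ Y) ` A1) + card ((\<lambda>(u, Y). u @ Y) ` ((Ls b p - {w}) \<times> A2))"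
    by (rule card_Un_le)
  also have "\<dots> \<le> card A1 + card ((Ls b p - {w}) \<times> A2)"
    by (intro add_mono card_image_le) (use finA1 finA2 finP in auto)
  also have "card ((Ls b p - {w}) \<times> A2) = (b ^ p - 1) * card A2"
  proof -
    have "w \<in> Ls b p" using assms unfolding Ls_def p_def by auto
    then have "card (Ls b p - {w}) = b ^ p - 1" using Ls_card[of b p] Ls_finite[of b p] by simp
    then show ?thesis by (simp add: card_cartesian_product)
  qed
  also have "card A1 = (if k = 0 then 0 else Gc b w m r (k - 1))"
  proof (cases k)
    case 0
    then show ?thesis unfolding A1_def by simp
  next
    case (Suc k')
    then have "A1 = {X \<in> Ls b (m * length w + r). bc w m X \<le> k - 1}" unfolding A1_def p_def by auto
    then show ?thesis unfolding Gc_def using Suc by simp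
  qed
  also have "card A2 = Gc b w m r k" unfolding A2_def Gc_def p_def by simp
  finally show ?thesis unfolding S_def Gc_def p_def by simp
qed

lemma Gc_0: "Gc b w 0 r k = b ^ r"
  unfolding Gc_def using Ls_card[of b r] by simp

lemma pow_step: "(m + 1) ^ k + (m + 1) ^ (k + 1) \<le> (m + 2 :: nat) ^ (k + 1)"
proof -
  have "(m + 1) ^ k \<le> (m + 2 :: nat) ^ k" by (rule power_mono) auto
  then have "(m + 2) * (m + 1) ^ k \<le> (m + 2) * (m + 2 :: nat) ^ k" by (rule mult_left_mono) simp
  moreover have "(m + 1) ^ k + (m + 1) ^ (k + 1) = (m + 2) * (m + 1 :: nat) ^ k"
    by (simp only: power_add power_one_right) (simp add: algebra_simps)
  moreover have "(m + 2 :: nat) ^ (k + 1) = (m + 2) * (m + 2) ^ k" by simp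
  ultimately show ?thesis by simp
qed

lemma Gc_bound:
  assumes "set w \<subseteq> {..<b}" "b ^ length w \<ge> 2"
  shows "Gc b w m r k \<le> (m + 1) ^ k * (b ^ length w - 1) ^ m * b ^ r"
proof (induction m arbitrary: k)
  case 0
  then show ?case by (simp add: Gc_0)
next
  case (Suc m)
  define c where "c = b ^ length w - 1"
  have c1: "c \<ge> 1" using assms(2) unfolding c_def by simp
  have rec: "Gc b w (Suc m) r k \<le> (if k = 0 then 0 else Gc b w m r (k - 1)) + c * Gc b w m r k"
    using Gc_rec[OF assms(1)] unfolding c_def by blast
  show ?case
  proof (cases k)
    case 0
    have "Gc b w m r k \<le> c ^ m * b ^ r" using Suc.IH[of k] 0 unfolding c_def by simp
    then have "c * Gc b w m r k \<le> c * (c ^ m * b ^ r)" by (rule mult_left_mono) simp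
    moreover have "Gc b w (Suc m) r k \<le> c * Gc b w m r k" using rec 0 by simp
    ultimately have "Gc b w (Suc m) r k \<le> c * (c ^ m * b ^ r)" by (rule order.trans[rotated])
    then show ?thesis using 0 unfolding c_def[symmetric] by (simp add: mult.assoc)
  next
    case (Suc k')
    have a: "Gc b w m r k' \<le> (m + 1) ^ k' * c ^ m * b ^ r" using Suc.IH[of k'] unfolding c_def by simp
    have cm: "c ^ m \<le> c ^ Suc m" by (rule power_increasing) (use c1 in auto)
    have a': "(m + 1) ^ k' * c ^ m * b ^ r \<le> (m + 1) ^ k' * c ^ Suc m * b ^ r"
      by (intro mult_le_mono order.refl cm)
    have IHk: "Gc b w m r k \<le> (m + 1) ^ k * c ^ m * b ^ r" using Suc.IH[of k] unfolding c_def by simp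
    have "c * Gc b w m r k \<le> c * ((m + 1) ^ k * c ^ m * b ^ r)" by (rule mult_left_mono[OF IHk]) simp
    also have "\<dots> = (m + 1) ^ (k' + 1) * c ^ Suc m * b ^ r" using Suc by (simp add: algebra_simps)
    finally have bb: "c * Gc b w m r k \<le> (m + 1) ^ (k' + 1) * c ^ Suc m * b ^ r" .
    have rec': "Gc b w (Suc m) r k \<le> Gc b w m r k' + c * Gc b w m r k" using rec Suc by simp
    have "Gc b w (Suc m) r k \<le> (m + 1) ^ k' * c ^ Suc m * b ^ r + (m + 1) ^ (k' + 1) * c ^ Suc m * b ^ r"
      using rec' add_mono[OF order.trans[OF a a'] bb] by linarith
    also have "\<dots> = ((m + 1) ^ k' + (m + 1) ^ (k' + 1)) * (c ^ Suc m * b ^ r)"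
      by (simp add: algebra_simps)
    also have "\<dots> \<le> (m + 2) ^ (k' + 1) * (c ^ Suc m * b ^ r)"
      by (intro mult_right_mono pow_step) auto
    finally show ?thesis using Suc unfolding c_def by (simp add: algebra_simps)
  qed
qed

lemma sumN: "(\<Sum>j\<le>k. Ncount b w j l) = card {X \<in> Ls b l. occ w X \<le> k}"
proof (induction k)
  case 0
  then show ?case unfolding Ncount_def Ls_def by simp
next
  case (Suc k)
  have "{X \<in> Ls b l. occ w X \<le> Suc k} = {X \<in> Ls b l. occ w X \<le> k} \<union> {X \<in> Ls b l. occ w X = Suc k}"
    by auto
  moreover have "card ({X \<in> Ls b l. occ w X \<le> k} \<union> {X \<in> Ls b l. occ w X = Suc k})
     = card {X \<in> Ls b l. occ w X \<le> k} + card {X \<in> Ls b l. occ w X = Suc k}"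
    by (rule card_Un_disjoint) (use Ls_finite in auto)
  moreover have "card {X \<in> Ls b l. occ w X = Suc k} = Ncount b w (Suc k) l"
    unfolding Ncount_def Ls_def by (simp add: conj_assoc)
  ultimately show ?case using Suc by simp
qed

lemma sumN_le:
  assumes "w \<noteq> []"
  shows "(\<Sum>j\<le>k. Ncount b w j l) \<le> Gc b w (l div length w) (l mod length w) k"
proof -
  have eq: "l div length w * length w + l mod length w = l" by simp
  have "{X \<in> Ls b l. occ w X \<le> k} \<subseteq> {X \<in> Ls b l. bc w (l div length w) X \<le> k}"
  proof safe
    fix X assume "X \<in> Ls b l" "occ w X \<le> k"
    moreover have "l div length w * length w \<le> length X" using \<open>X \<in> Ls b l\<close>
      unfolding Ls_def by (simp add: div_times_less_eq_dividend)
    ultimately show "bc w (l div length w) X \<le> k" using occ_bc[OF _ assms] by (meson le_trans)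
  qed
  then have "card {X \<in> Ls b l. occ w X \<le> k} \<le> card {X \<in> Ls b l. bc w (l div length w) X \<le> k}"
    by (rule card_mono[rotated]) (use Ls_finite in auto)
  then show ?thesis unfolding sumN Gc_def eq .
qed

lemma N_le:
  assumes "w \<noteq> []"
  shows "Ncount b w k l \<le> Gc b w (l div length w) (l mod length w) k"
proof -
  have "Ncount b w k l \<le> (\<Sum>j\<le>k. Ncount b w j l)"
    by (rule member_le_sum) auto
  then show ?thesis using sumN_le[OF assms] le_trans by blast
qed

lemma gen_sum:
  fixes g h :: "nat \<Rightarrow> real" and q B K :: real
  assumes qB: "q * B = 1" and q0: "0 < q" and q1: "q \<le> 1" and g0: "g 0 = 1"
    and gnn: "\<And>m. g m \<ge> 0"
    and grec: "\<And>m. g (Suc m) \<le> q * h m + (1 - q) * g m"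
    and hs: "\<And>M. sum h {..<M} \<le> K * B"
  shows "sum g {..<M} \<le> (K + 1) * B"
proof (cases M)
  case 0
  have "0 < q * B" using qB by simp
  then have B0: "B > 0" using q0 by (simp add: zero_less_mult_iff)
  have "0 \<le> K * B" using hs[of 0] by simp
  then have "K \<ge> 0" using B0 by (simp add: zero_le_mult_iff)
  then show ?thesis using 0 B0 by simp
next
  case (Suc M')
  define A where "A = sum g {..<Suc M'}"
  have "A = g 0 + (\<Sum>m<M'. g (Suc m))" unfolding A_def by (rule sum.lessThan_Suc_shift)
  also have "(\<Sum>m<M'. g (Suc m)) \<le> (\<Sum>m<M'. q * h m + (1 - q) * g m)"
    by (rule sum_mono) (rule grec)
  also have "\<dots> = q * sum h {..<M'} + (1 - q) * sum g {..<M'}"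
    by (simp add: sum.distrib sum_distrib_left)
  finally have A1: "A \<le> 1 + q * sum h {..<M'} + (1 - q) * sum g {..<M'}" using g0 by simp
  have "sum g {..<M'} \<le> A" unfolding A_def by (rule sum_mono2) (use gnn in auto)
  then have "(1 - q) * sum g {..<M'} \<le> (1 - q) * A" using q1 by (intro mult_left_mono) auto
  moreover have "q * sum h {..<M'} \<le> q * (K * B)" using hs[of M'] q0 by (intro mult_left_mono) auto
  ultimately have "A \<le> 1 + q * (K * B) + (1 - q) * A" using A1 by linarith
  moreover have "q * (K * B) = K"
  proof -
    have "q * (K * B) = K * (q * B)" by (simp only: mult_ac)
    then show ?thesis using qB by simp
  qed
  moreover have "(1 - q) * A = A - q * A" by (simp add: algebra_simps)
  ultimately have "q * A \<le> 1 + K" by linarith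
  have "0 < q * B" using qB by simp
  then have "B > 0" using q0 by (simp add: zero_less_mult_iff)
  have "B * (q * A) \<le> B * (1 + K)"
    by (rule mult_left_mono) (use \<open>q * A \<le> 1 + K\<close> \<open>B > 0\<close> in auto)
  moreover have "B * (q * A) = (q * B) * A" by (simp only: mult_ac)
  ultimately have "A \<le> B * (1 + K)" using qB by simp
  then show ?thesis unfolding A_def using Suc by (simp add: algebra_simps)
qed

definition gg :: "nat \<Rightarrow> nat list \<Rightarrow> nat \<Rightarrow> nat \<Rightarrow> nat \<Rightarrow> real" where
  "gg b w r m k = real (Gc b w m r k) / real b ^ (m * length w + r)"

lemma gg_rec:
  assumes "set w \<subseteq> {..<b}" "b \<ge> 1"
  shows "gg b w r (Suc m) k \<le> (1 / real b ^ length w) * (if k = 0 then 0 else gg b w r m (k - 1))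
            + (1 - 1 / real b ^ length w) * gg b w r m k"
proof -
  define P where "P = real b ^ length w"
  define B where "B = real b ^ (m * length w + r)"
  have P1: "P \<ge> 1" unfolding P_def using assms by simp
  have B0: "B > 0" unfolding B_def using assms by simp
  have bp: "b ^ length w \<ge> 1" using assms by simp
  have "real (Gc b w (Suc m) r k) \<le> real ((if k = 0 then 0 else Gc b w m r (k - 1)) + (b ^ length w - 1) * Gc b w m r k)"
    using Gc_rec[OF assms(1)] by (simp only: of_nat_le_iff)
  also have "\<dots> = (if k = 0 then 0 else real (Gc b w m r (k - 1))) + (P - 1) * real (Gc b w m r k)"
    using bp unfolding P_def by (simp add: of_nat_diff)
  finally have ineq: "real (Gc b w (Suc m) r k) \<le> (if k = 0 then 0 else real (Gc b w m r (k - 1))) + (P - 1) * real (Gc b w m r k)" .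
  have eqB: "real b ^ (Suc m * length w + r) = P * B" unfolding P_def B_def by (simp add: power_add algebra_simps)
  have "gg b w r (Suc m) k = real (Gc b w (Suc m) r k) / (P * B)" unfolding gg_def eqB ..
  also have "\<dots> \<le> ((if k = 0 then 0 else real (Gc b w m r (k - 1))) + (P - 1) * real (Gc b w m r k)) / (P * B)"
    by (rule divide_right_mono[OF ineq]) (use P1 B0 in auto)
  also have "\<dots> = (1 / P) * (if k = 0 then 0 else gg b w r m (k - 1)) + (1 - 1 / P) * gg b w r m k"
    unfolding gg_def B_def[symmetric] using P1 B0 by (cases "k = 0") (simp_all add: field_simps)
  finally show ?thesis unfolding P_def .
qed

lemma gg_sum:
  assumes "set w \<subseteq> {..<b}" "b \<ge> 1"
  shows "sum (\<lambda>m. gg b w r m k) {..<M} \<le> (real k + 1) * real b ^ length w"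
proof (induction k arbitrary: M)
  case 0
  show ?case
    by (rule gen_sum[where h = "\<lambda>_. 0" and q = "1 / real b ^ length w" and K = 0, simplified])
      (use assms gg_rec[OF assms, where k = 0] in \<open>auto simp: gg_def Gc_0\<close>)
next
  case (Suc k)
  show ?case
    using gen_sum[where h = "\<lambda>m. gg b w r m k" and q = "1 / real b ^ length w" and K = "real k + 1"
        and g = "\<lambda>m. gg b w r m (Suc k)" and B = "real b ^ length w"]
      assms gg_rec[OF assms, where k = "Suc k"] Suc.IH
    by (auto simp: gg_def Gc_0 algebra_simps)
qed

lemma part2:
  fixes b :: nat and w :: "nat list"
  assumes b2: "b \<ge> 2" and wne: "length w \<ge> 1" and ws: "set w \<subseteq> {..<b}"
  shows "(\<Sum>j\<le>k. Zval b w j (1 / real b)) \<le> real (length w) * real (k + 1) * real b ^ length w"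
proof -
  define p where "p = length w"
  have p0: "p > 0" using wne unfolding p_def by linarith
  have wne': "w \<noteq> []" using wne by (cases w) auto
  have b1: "b \<ge> 1" using b2 by simp
  define f where "f j l = Zcoeff b w j l * (1 / real b) ^ l" for j l
  define h where "h l = (\<Sum>j\<le>k. f j l)" for l
  define Bd where "Bd = real p * real (k + 1) * real b ^ p"
  have fnn: "f j l \<ge> 0" for j l unfolding f_def Zcoeff_def by simp
  have hnn: "h l \<ge> 0" for l unfolding h_def using fnn by (simp add: sum_nonneg)
  have hle: "h l \<le> gg b w (l mod p) (l div p) k" for l
  proof -
    have eq: "l div p * p + l mod p = l" by simp
    have "h l = real (\<Sum>j\<le>k. Ncount b w j l) / real b ^ l"
      unfolding h_def f_def Zcoeff_def by (simp add: sum_divide_distrib power_one_over)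
    also have "\<dots> \<le> real (Gc b w (l div p) (l mod p) k) / real b ^ l"
    proof (rule divide_right_mono)
      have "(\<Sum>j\<le>k. Ncount b w j l) \<le> Gc b w (l div p) (l mod p) k"
        using sumN_le[OF wne', where k=k and b=b and l=l] unfolding p_def .
      then show "real (\<Sum>j\<le>k. Ncount b w j l) \<le> real (Gc b w (l div p) (l mod p) k)"
        by (simp only: of_nat_le_iff)
    qed simp
    also have "\<dots> = gg b w (l mod p) (l div p) k" unfolding gg_def p_def[symmetric] eq ..
    finally show ?thesis .
  qed
  have hsumM: "sum h {..<M * p} \<le> Bd" for M
  proof -
    have "sum h {..<M * p} \<le> sum (\<lambda>l. gg b w (l mod p) (l div p) k) {..<M * p}"
      by (rule sum_mono) (rule hle)
    also have "\<dots> = (\<Sum>m<M. sum (\<lambda>l. gg b w (l mod p) (l div p) k) {m * p..<m * p + p})"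
      by (rule sum.nat_group[symmetric])
    also have "\<dots> = (\<Sum>m<M. \<Sum>r<p. gg b w r m k)"
    proof (rule sum.cong[OF refl])
      fix m
      have im: "{m * p..<m * p + p} = (\<lambda>r. m * p + r) ` {..<p}"
      proof safe
        fix x assume "x \<in> {m * p..<m * p + p}"
        then show "x \<in> (\<lambda>r. m * p + r) ` {..<p}" by (intro image_eqI[of _ _ "x - m * p"]) auto
      qed auto
      show "sum (\<lambda>l. gg b w (l mod p) (l div p) k) {m * p..<m * p + p} = (\<Sum>r<p. gg b w r m k)"
        unfolding im using p0 by (subst sum.reindex) (auto simp: inj_on_def)
    qed
    also have "\<dots> = (\<Sum>r<p. \<Sum>m<M. gg b w r m k)" by (rule sum.swap)
    also have "\<dots> \<le> (\<Sum>r<p. (real k + 1) * real b ^ p)"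
      by (rule sum_mono) (use gg_sum[OF ws b1] p_def in auto)
    also have "\<dots> = Bd" unfolding Bd_def by simp
    finally show ?thesis .
  qed
  have hsum: "sum h {..<n} \<le> Bd" for n
  proof -
    have "sum h {..<n} \<le> sum h {..<n * p}"
      by (rule sum_mono2) (use p0 hnn in auto)
    then show ?thesis using hsumM[of n] by linarith
  qed
  have hsumm: "summable h"
  proof (rule bounded_imp_summable[OF hnn])
    fix n show "(\<Sum>l\<le>n. h l) \<le> Bd" using hsum[of "Suc n"] by (simp add: lessThan_Suc_atMost)
  qed
  have fsumm: "summable (f j)" if "j \<in> {..k}" for j
  proof (rule summable_comparison_test[OF _ hsumm])
    show "\<exists>N. \<forall>n\<ge>N. norm (f j n) \<le> h n"
      using that fnn unfolding h_def by (auto intro!: member_le_sum)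
  qed
  have "(\<Sum>j\<le>k. Zval b w j (1 / real b)) = (\<Sum>j\<le>k. suminf (f j))"
    unfolding Zval_def f_def ..
  also have "\<dots> = suminf h" unfolding h_def by (rule suminf_sum[symmetric]) (rule fsumm)
  also have "\<dots> \<le> Bd" by (rule suminf_le_const[OF hsumm hsum])
  finally show ?thesis unfolding Bd_def p_def .
qed

lemma conv_radius_poly: "conv_radius (\<lambda>l. real (Suc l) ^ k) = 1"
proof (rule conv_radius_ratio_limit_nonzero[where c = 1])
  have "(\<lambda>n. real (Suc n) / real (Suc (Suc n))) \<longlonglongrightarrow> 1"
    using LIMSEQ_Suc[OF LIMSEQ_n_over_Suc_n[where 'a = real]] by simp
  then have "(\<lambda>n. (real (Suc n) / real (Suc (Suc n))) ^ k) \<longlonglongrightarrow> 1 ^ k"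
    by (rule tendsto_power)
  then show "(\<lambda>n. norm (real (Suc n) ^ k) / norm (real (Suc (Suc n)) ^ k)) \<longlonglongrightarrow> 1"
    by (simp add: power_divide)
qed auto

lemma part1:
  fixes b :: nat and w :: "nat list"
  assumes b2: "b \<ge> 2" and wne: "length w \<ge> 1" and ws: "set w \<subseteq> {..<b}"
  shows "conv_radius (Zcoeff b w k) \<ge> ereal ((real b ^ length w - 1) powr (- 1 / real (length w)))"
proof -
  define p where "p = length w"
  have p0: "p > 0" using wne unfolding p_def by linarith
  have wne': "w \<noteq> []" using wne by (cases w) auto
  have b1: "b \<ge> 1" using b2 by simp
  define C where "C = real b ^ p - 1"
  have bpn: "b ^ p \<ge> 2"
  proof -
    have "b ^ 1 \<le> b ^ p" by (rule power_increasing) (use p0 b1 in auto)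
    then show ?thesis using b2 by simp
  qed
  have bp2: "real b ^ p \<ge> 2"
  proof -
    have "real (2::nat) \<le> real (b ^ p)" using bpn by (simp only: of_nat_le_iff)
    then show ?thesis by simp
  qed
  have C1: "C \<ge> 1" unfolding C_def using bp2 by simp
  define \<gamma> where "\<gamma> = C powr (1 / real p)"
  have g1: "\<gamma> \<ge> 1" unfolding \<gamma>_def using C1 by (intro ge_one_powr_ge_zero) auto
  have gp: "\<gamma> ^ p = C" unfolding \<gamma>_def using C1 p0 by (simp add: powr_power)
  have bound: "Zcoeff b w k l \<le> real b ^ p * (real (Suc l) ^ k * \<gamma> ^ l)" for l
  proof -
    define m where "m = l div p"
    define r where "r = l mod p"
    have "Ncount b w k l \<le> (m + 1) ^ k * (b ^ p - 1) ^ m * b ^ r"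
      using N_le[OF wne', of b k l] Gc_bound[OF ws, of m r k] bpn unfolding m_def r_def p_def
      by linarith
    then have "Zcoeff b w k l \<le> real ((m + 1) ^ k * (b ^ p - 1) ^ m * b ^ r)"
      unfolding Zcoeff_def by (simp only: of_nat_le_iff)
    also have "\<dots> = real (Suc m) ^ k * C ^ m * real b ^ r"
      unfolding C_def using bpn by (simp add: of_nat_diff)
    also have "\<dots> \<le> real (Suc l) ^ k * \<gamma> ^ l * real b ^ p"
    proof (intro mult_mono)
      show "real (Suc m) ^ k \<le> real (Suc l) ^ k"
        by (rule power_mono) (auto simp: m_def div_le_dividend)
      have "C ^ m = \<gamma> ^ (m * p)" unfolding power_mult[of \<gamma> p m, unfolded mult.commute[of p m]] gp ..
      also have "\<dots> \<le> \<gamma> ^ l" by (rule power_increasing) (use g1 in \<open>auto simp: m_def div_times_less_eq_dividend\<close>)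
      finally show "C ^ m \<le> \<gamma> ^ l" .
      show "real b ^ r \<le> real b ^ p" by (rule power_increasing) (use b1 p0 in \<open>auto simp: r_def\<close>)
    qed (use C1 g1 in auto)
    finally show ?thesis by (simp add: algebra_simps)
  qed
  have Rg: "C powr (- 1 / real p) = 1 / \<gamma>"
    unfolding \<gamma>_def using C1 by (simp add: powr_minus_divide[symmetric])
  have "conv_radius (Zcoeff b w k) \<ge> ereal (1 / \<gamma>)"
  proof (rule conv_radius_geI_ex')
    fix \<rho> :: real assume r0: "0 < \<rho>" and rl: "ereal \<rho> < ereal (1 / \<gamma>)"
    have "\<gamma> * \<rho> < 1" using rl g1 by (simp add: field_simps)
    then have "ereal (norm (\<gamma> * \<rho>)) < conv_radius (\<lambda>l. real (Suc l) ^ k)"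
      unfolding conv_radius_poly using r0 g1 by simp
    then have "summable (\<lambda>l. real (Suc l) ^ k * (\<gamma> * \<rho>) ^ l)"
      by (rule summable_in_conv_radius)
    then have sm: "summable (\<lambda>l. real b ^ p * (real (Suc l) ^ k * (\<gamma> * \<rho>) ^ l))"
      by (rule summable_mult)
    show "summable (\<lambda>l. Zcoeff b w k l * of_real \<rho> ^ l)"
    proof (rule summable_comparison_test[OF _ sm], intro exI allI impI)
      fix l :: nat
      have "norm (Zcoeff b w k l * of_real \<rho> ^ l) = Zcoeff b w k l * \<rho> ^ l"
        using r0 by (simp add: Zcoeff_def)
      also have "\<dots> \<le> real b ^ p * (real (Suc l) ^ k * \<gamma> ^ l) * \<rho> ^ l"
        by (rule mult_right_mono[OF bound]) (use r0 in auto)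
      also have "\<dots> = real b ^ p * (real (Suc l) ^ k * (\<gamma> * \<rho>) ^ l)"
        by (simp add: power_mult_distrib algebra_simps)
      finally show "norm (Zcoeff b w k l * of_real \<rho> ^ l) \<le> real b ^ p * (real (Suc l) ^ k * (\<gamma> * \<rho>) ^ l)" .
    qed
  qed
  then show ?thesis using Rg unfolding C_def p_def by simp
qed

theorem lemma1:
  fixes b p :: nat and w :: "nat list"
  assumes "b \<ge> 2" and "p \<ge> 1" and "length w = p" and "set w \<subseteq> {..<b}"
  shows "(\<forall>k. conv_radius (Zcoeff b w k) \<ge> ereal ((real b ^ p - 1) powr (- 1 / real p)))
    \<and> (\<forall>k. (\<Sum>j\<le>k. Zval b w j (1 / real b)) \<le> real p * real (k + 1) * real b ^ p)"
  using part1[OF assms(1) _ assms(4)] part2[OF assms(1) _ assms(4)] assms(2,3) by auto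

end
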